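(* Let $n\in\mathbb{N}$. (i) The map $\mathcal{T}_n:\mathcal{RBC}_n\to\mathcal{P}(\Theta)$ is continuous when $\mathcal{P}(\Theta)$ carries the weak topology. (ii) For every $p\in[1,\infty)$, the map $\mathcal{T}_n:\mathcal{RBC}_n\to\mathcal{P}_p(\Theta)$ is continuous when $\mathcal{P}_p(\Theta)$ carries the topology whose neighborhood basis at $G_0$ consists of sets $\{G:|\int f_i\,d(G-G_0)|<\varepsilon_i,\ i=1,\ldots,m\}$, possibly intersected with $\{G:|\int|\theta|^p\,d(G-G_0)(\theta)|<\varepsilon_0\}$, for bounded continuous $f_i$ and $\varepsilon_i>0$.
   Context: $\Theta\subseteq\mathbb{R}$ is $\mathbb{R}$, a closed half-line, or a compact interval with nonempty interior; $\mathcal{P}(\Theta)$ and $\mathcal{P}_p(\Theta)$ are Borel probability measures on $\Theta$ (resp. with finite $p$-th moment). SBA of a measure $G$ with finite mean: $\mu_{1,1}=\int\theta\,dG$; $\mu_{j,2l}=\mu_{j-1,l}$, $\mu_{j,2l-1}=b_G(\mu_{j-1,l-1},\mu_{j-1,l}]$ where $b_G(a_1,a_2]=\int_{(a_1,a_2]}\theta\,dG/(G(a_2)-G(a_1))$ (or $a_1$ if the mass is zero), $\mu_{j,0}=\inf\Theta$, $\mu_{j,2^j}=\sup\Theta$; $G$ has a regular level $n$ SBA if $\mu_{n,1},\ldots,\mu_{n,2^n-1}$ are distinct. $\mathcal{RBC}_n$ is the set of arrays $(\mu_{j,l})_{1\le j\le n+1,1\le l\le 2^j-1}$ consisting of the first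 $n+1$ rows of the SBA of some measure with a regular level $n$ SBA, with the subspace topology of Euclidean space. $\mathcal{T}_n$ maps such an array to $\sum_{l=1}^{2^n}w_{n,l}\delta_{\mu_{n+1,2l-1}}$ with $w_{n,l}=F(\mu_{n,l})-F(\mu_{n,l-1})$, where $F(\mu_{j,0})=0$, $F(\mu_{j,2^j})=1$, $F(\mu_{j,2l})=F(\mu_{j-1,l})$ and, for $1\le j\le n$, $F(\mu_{j,2l-1})=F(\mu_{j-1,l-1})+[F(\mu_{j-1,l})-F(\mu_{j-1,l-1})]\frac{\mu_{j+1,4l-1}-\mu_{j+1,4l-2}}{\mu_{j+1,4l-1}-\mu_{j+1,4l-3}}$ ($0/0=1$). *)

theory Defs
  imports "HOL-Analysis.Analysis" "HOL-Probability.Probability"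
begin

definition admissible_Theta :: "real set \<Rightarrow> bool" where
  "admissible_Theta \<Theta> \<longleftrightarrow>
     \<Theta> = UNIV \<or> (\<exists>a. \<Theta> = {a..} \<or> \<Theta> = {..a}) \<or> (\<exists>a b. a < b \<and> \<Theta> = {a..b})"

text \<open>Borel probability measures on Theta, represented as Borel probability
  measures on the real line concentrated on Theta.\<close>
definition Pr :: "real set \<Rightarrow> real measure set" where
  "Pr \<Theta> = {G. sets G = sets borel \<and> prob_space G \<and> emeasure G (UNIV - \<Theta>) = 0}"

definition Pr_p :: "real set \<Rightarrow> real \<Rightarrow> real measure set" where
  "Pr_p \<Theta> p = {G \<in> Pr \<Theta>. integrable G (\<lambda>x. \<bar>x\<bar> powr p)}"

definition cdfG :: "real measure \<Rightarrow> ereal \<Rightarrow> real" where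
  "cdfG G a = (if a = -\<infinity> then 0 else if a = \<infinity> then 1 else measure G {..real_of_ereal a})"

definition Ioc_e :: "ereal \<Rightarrow> ereal \<Rightarrow> real set" where
  "Ioc_e a1 a2 = {x. a1 < ereal x \<and> ereal x \<le> a2}"

definition bary :: "real measure \<Rightarrow> ereal \<Rightarrow> ereal \<Rightarrow> ereal" where
  "bary G a1 a2 = (if cdfG G a2 - cdfG G a1 = 0 then a1
      else ereal ((\<integral>x\<in>Ioc_e a1 a2. x \<partial>G) / (cdfG G a2 - cdfG G a1)))"

text \<open>sba G Theta j l = mu_{j,l}; entries with l > 2^j are irrelevant.\<close>
fun sba :: "real measure \<Rightarrow> real set \<Rightarrow> nat \<Rightarrow> nat \<Rightarrow> ereal" where
  "sba G \<Theta> 0 l = (if l = 0 then Inf (ereal ` \<Theta>) else Sup (ereal ` \<Theta>))"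
| "sba G \<Theta> (Suc j) l =
     (if l = 0 then Inf (ereal ` \<Theta>)
      else if l = 2 ^ Suc j then Sup (ereal ` \<Theta>)
      else if j = 0 \<and> l = 1 then ereal (\<integral>x. x \<partial>G)
      else if even l then sba G \<Theta> j (l div 2)
      else bary G (sba G \<Theta> j ((l - 1) div 2)) (sba G \<Theta> j ((l + 1) div 2)))"

definition regular_sba :: "real measure \<Rightarrow> real set \<Rightarrow> nat \<Rightarrow> bool" where
  "regular_sba G \<Theta> n \<longleftrightarrow>
     (\<forall>l1 l2. 1 \<le> l1 \<and> l1 \<le> 2 ^ n - 1 \<and> 1 \<le> l2 \<and> l2 \<le> 2 ^ n - 1 \<and> l1 \<noteq> l2
        \<longrightarrow> sba G \<Theta> n l1 \<noteq> sba G \<Theta> n l2)"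

definition idx :: "nat \<Rightarrow> nat \<times> nat \<Rightarrow> bool" where
  "idx n jl \<longleftrightarrow> 1 \<le> fst jl \<and> fst jl \<le> n + 1 \<and> 1 \<le> snd jl \<and> snd jl \<le> 2 ^ fst jl - 1"

text \<open>Arrays are real functions on nat x nat vanishing outside the index set;
  the product topology on such functions is the Euclidean topology.\<close>
definition RBC :: "nat \<Rightarrow> real set \<Rightarrow> (nat \<times> nat \<Rightarrow> real) set" where
  "RBC n \<Theta> = {A. \<exists>G \<in> Pr \<Theta>. integrable G (\<lambda>x. x) \<and> regular_sba G \<Theta> n \<and>
      (\<forall>jl. (idx n jl \<longrightarrow> ereal (A jl) = sba G \<Theta> (fst jl) (snd jl)) \<and>
            (\<not> idx n jl \<longrightarrow> A jl = 0))}"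

definition qt :: "real \<Rightarrow> real \<Rightarrow> real" where
  "qt a b = (if b = 0 \<and> a = 0 then 1 else a / b)"

text \<open>Fv A j l = F(mu_{j,l}).\<close>
fun Fv :: "(nat \<times> nat \<Rightarrow> real) \<Rightarrow> nat \<Rightarrow> nat \<Rightarrow> real" where
  "Fv A 0 l = (if l = 0 then 0 else 1)"
| "Fv A (Suc j) l =
     (if l = 0 then 0
      else if l = 2 ^ Suc j then 1
      else if even l then Fv A j (l div 2)
      else (let k = (l + 1) div 2 in
              Fv A j (k - 1) + (Fv A j k - Fv A j (k - 1)) *
                qt (A (j + 2, 4 * k - 1) - A (j + 2, 4 * k - 2))
                   (A (j + 2, 4 * k - 1) - A (j + 2, 4 * k - 3))))"

definition wts :: "nat \<Rightarrow> (nat \<times> nat \<Rightarrow> real) \<Rightarrow> nat \<Rightarrow> real" where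
  "wts n A l = Fv A n l - Fv A n (l - 1)"

definition Tn :: "nat \<Rightarrow> (nat \<times> nat \<Rightarrow> real) \<Rightarrow> real measure" where
  "Tn n A = measure_of UNIV (sets borel)
     (\<lambda>S. \<Sum>l\<in>{1..2 ^ n}. ennreal (wts n A l) * indicator S (A (n + 1, 2 * l - 1)))"

definition bcont :: "(real \<Rightarrow> real) \<Rightarrow> bool" where
  "bcont f \<longleftrightarrow> continuous_on UNIV f \<and> bounded (range f)"

definition weak_top :: "real set \<Rightarrow> real measure topology" where
  "weak_top \<Theta> = topology_generated_by
     {{G \<in> Pr \<Theta>. \<bar>(\<integral>x. f x \<partial>G) - (\<integral>x. f x \<partial>G0)\<bar> < e} | f G0 e.
        bcont f \<and> G0 \<in> Pr \<Theta> \<and> e > 0}"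

definition wass_top :: "real set \<Rightarrow> real \<Rightarrow> real measure topology" where
  "wass_top \<Theta> p = topology_generated_by
     ({{G \<in> Pr_p \<Theta> p. \<bar>(\<integral>x. f x \<partial>G) - (\<integral>x. f x \<partial>G0)\<bar> < e} | f G0 e.
        bcont f \<and> G0 \<in> Pr_p \<Theta> p \<and> e > 0} \<union>
      {{G \<in> Pr_p \<Theta> p. \<bar>(\<integral>x. \<bar>x\<bar> powr p \<partial>G) - (\<integral>x. \<bar>x\<bar> powr p \<partial>G0)\<bar> < e} | G0 e.
        G0 \<in> Pr_p \<Theta> p \<and> e > 0})"

end

theory Submission
  imports Defs
begin


definition Dm :: "nat \<Rightarrow> (nat \<times> nat \<Rightarrow> real) \<Rightarrow> real measure" where
  "Dm n A = distr (point_measure {1..2 ^ n} (\<lambda>l. ennreal (wts n A l))) borel (\<lambda>l. A (n + 1, 2 * l - 1))"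

lemma sets_Dm[simp, measurable_cong]: "sets (Dm n A) = sets borel"
  by (simp add: Dm_def)

lemma space_Dm[simp]: "space (Dm n A) = UNIV"
  by (simp add: Dm_def)

lemma emeasure_Dm: "S \<in> sets borel \<Longrightarrow> emeasure (Dm n A) S =
   (\<Sum>l\<in>{1..2 ^ n}. ennreal (wts n A l) * indicator S (A (n + 1, 2 * l - 1)))"
proof -
  assume S: "S \<in> sets borel"
  have "emeasure (Dm n A) S = emeasure (point_measure {1..2 ^ n} (\<lambda>l. ennreal (wts n A l)))
      ((\<lambda>l. A (n + 1, 2 * l - 1)) -` S \<inter> {1..2^n})"
    unfolding Dm_def using S by (subst emeasure_distr) (auto simp: space_point_measure)
  also have "\<dots> = (\<Sum>l\<in>{1..2 ^ n} \<inter> {l. A (n + 1, 2 * l - 1) \<in> S}. ennreal (wts n A l))"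
  proof -
    have "(\<lambda>l. A (n + 1, 2 * l - 1)) -` S \<inter> {1..2^n} = {1..2 ^ n} \<inter> {l. A (n + 1, 2 * l - 1) \<in> S}"
      by auto
    then show ?thesis by (simp add: emeasure_point_measure_finite)
  qed
  also have "\<dots> = (\<Sum>l\<in>{1..2 ^ n}. ennreal (wts n A l) * indicator S (A (n + 1, 2 * l - 1)))"
    by (simp add: sum.inter_restrict indicator_def)
  finally show ?thesis .
qed

lemma Tn_eq: "Tn n A = Dm n A"
proof -
  have "Tn n A = measure_of UNIV (sets borel) (emeasure (Dm n A))"
    unfolding Tn_def
    by (rule measure_of_eq) (auto simp: emeasure_Dm sets.sigma_sets_eq[of borel, simplified])
  also have "\<dots> = Dm n A"
    using measure_of_of_measure[of "Dm n A"] by simp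
  finally show ?thesis .
qed

lemma integral_Dm:
  assumes nn: "\<And>l. l \<in> {1..2^n} \<Longrightarrow> wts n A l \<ge> 0" and f: "f \<in> borel_measurable borel"
  shows "(\<integral>x. f x \<partial>Dm n A) = (\<Sum>l\<in>{1..2 ^ n}. wts n A l * f (A (n + 1, 2 * l - 1)))"
proof -
  have "(\<integral>x. f x \<partial>Dm n A) = (\<integral>l. f (A (n + 1, 2 * l - 1)) \<partial>point_measure {1..2 ^ n} (\<lambda>l. ennreal (wts n A l)))"
    unfolding Dm_def using f by (subst integral_distr) auto
  also have "\<dots> = (\<integral>l. wts n A l *\<^sub>R f (A (n + 1, 2 * l - 1)) \<partial>count_space {1..2 ^ n})"
    unfolding point_measure_def using nn
    by (subst integral_density) (auto simp: AE_count_space)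
  also have "\<dots> = (\<Sum>l\<in>{1..2 ^ n}. wts n A l * f (A (n + 1, 2 * l - 1)))"
    by (simp add: lebesgue_integral_count_space_finite)
  finally show ?thesis .
qed

lemma integrable_Dm:
  assumes nn: "\<And>l. l \<in> {1..2^n} \<Longrightarrow> wts n A l \<ge> 0" and f: "f \<in> borel_measurable borel"
  shows "integrable (Dm n A) (f :: real \<Rightarrow> real)"
proof -
  have "integrable (point_measure {1..2 ^ n} (\<lambda>l. ennreal (wts n A l))) (\<lambda>l. f (A (n + 1, 2 * l - 1)))"
    unfolding point_measure_def using nn
    by (subst integrable_density) (auto simp: AE_count_space integrable_count_space)
  then show ?thesis unfolding Dm_def using f by (subst integrable_distr_eq) auto
qed

lemma Ioc_e_borel[measurable]: "Ioc_e a1 a2 \<in> sets borel"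
  unfolding Ioc_e_def by measurable

lemma cdf_diff:
  assumes P: "prob_space G" and S: "sets G = sets borel" and le: "a1 \<le> a2"
  shows "cdfG G a2 - cdfG G a1 = measure G (Ioc_e a1 a2)"
proof -
  interpret prob_space G by fact
  have sp: "space G = UNIV" using S sets_eq_imp_space_eq by fastforce
  have [measurable]: "B \<in> sets borel \<Longrightarrow> B \<in> sets G" for B using S by simp
  show ?thesis
  proof (cases a1 rule: ereal_cases)
    case (real r1)
    show ?thesis
    proof (cases a2 rule: ereal_cases)
      case (real r2)
      then have "Ioc_e a1 a2 = {..r2} - {..r1}" using \<open>a1 = ereal r1\<close> by (auto simp: Ioc_e_def)
      moreover have "r1 \<le> r2" using le real \<open>a1 = ereal r1\<close> by simp
      ultimately show ?thesis using real \<open>a1 = ereal r1\<close>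
        by (simp add: cdfG_def finite_measure_Diff)
    next
      case PInf
      then have "Ioc_e a1 a2 = space G - {..r1}" using \<open>a1 = ereal r1\<close> sp by (auto simp: Ioc_e_def)
      then show ?thesis using PInf \<open>a1 = ereal r1\<close>
        by (simp add: cdfG_def prob_compl)
    next
      case MInf
      then show ?thesis using le \<open>a1 = ereal r1\<close> by simp
    qed
  next
    case PInf
    then have "a2 = \<infinity>" using le by simp
    then show ?thesis using PInf by (simp add: cdfG_def Ioc_e_def)
  next
    case MInf
    show ?thesis
    proof (cases a2 rule: ereal_cases)
      case (real r2)
      then have "Ioc_e a1 a2 = {..r2}" using MInf by (auto simp: Ioc_e_def)
      then show ?thesis using real MInf by (simp add: cdfG_def)
    next
      case PInf
      then have "Ioc_e a1 a2 = space G" using MInf sp by (auto simp: Ioc_e_def)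
      then show ?thesis using PInf MInf by (simp add: cdfG_def prob_space)
    next
      case MInf
      then show ?thesis using \<open>a1 = - \<infinity>\<close> by (simp add: cdfG_def Ioc_e_def)
    qed
  qed
qed

lemma bary_bounds:
  assumes P: "prob_space G" and S: "sets G = sets borel" and I: "integrable G (\<lambda>x. x)"
    and le: "a1 \<le> a2"
  shows "a1 \<le> bary G a1 a2 \<and> bary G a1 a2 \<le> a2"
proof (cases "cdfG G a2 - cdfG G a1 = 0")
  case True
  then show ?thesis using le by (simp add: bary_def)
next
  case False
  interpret prob_space G by fact
  have [measurable]: "B \<in> sets borel \<Longrightarrow> B \<in> sets G" for B using S by simp
  define T where "T = Ioc_e a1 a2"
  define c where "c = measure G T"
  have cd: "cdfG G a2 - cdfG G a1 = c" unfolding c_def T_def by (rule cdf_diff[OF P S le])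
  have cpos: "c > 0" using False cd unfolding c_def by (simp add: less_le)
  have b: "bary G a1 a2 = ereal ((\<integral>x\<in>T. x \<partial>G) / c)"
    using False cd by (simp add: bary_def T_def)
  have Tm: "T \<in> sets G" unfolding T_def by simp
  have si: "set_integrable G T (\<lambda>x. x)"
    unfolding set_integrable_def using integrable_mult_indicator[OF Tm I] .
  have sc: "set_integrable G T (\<lambda>x. r)" for r :: real
    unfolding set_integrable_def using integrable_mult_indicator[OF Tm integrable_const] .
  have ic: "(\<integral>x\<in>T. r \<partial>G) = c * r" for r :: real
    using Tm by (simp add: set_integral_const c_def)
  have lo: "a1 \<le> bary G a1 a2"
  proof (cases a1 rule: ereal_cases)
    case (real r1)
    have "(\<integral>x\<in>T. r1 \<partial>G) \<le> (\<integral>x\<in>T. x \<partial>G)"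
      by (rule set_integral_mono[OF sc si]) (auto simp: T_def Ioc_e_def real)
    then have "r1 \<le> (\<integral>x\<in>T. x \<partial>G) / c" using cpos ic by (simp add: pos_le_divide_eq mult.commute)
    then show ?thesis using real b by simp
  next
    case PInf
    then have "a2 = \<infinity>" using le by simp
    then have "c = 0" using PInf by (simp add: c_def T_def Ioc_e_def)
    then show ?thesis using cpos by simp
  qed simp
  have hi: "bary G a1 a2 \<le> a2"
  proof (cases a2 rule: ereal_cases)
    case (real r2)
    have "(\<integral>x\<in>T. x \<partial>G) \<le> (\<integral>x\<in>T. r2 \<partial>G)"
      by (rule set_integral_mono[OF si sc]) (auto simp: T_def Ioc_e_def real)
    then have "(\<integral>x\<in>T. x \<partial>G) / c \<le> r2" using cpos ic by (simp add: pos_divide_le_eq mult.commute)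
    then show ?thesis using real b by simp
  next
    case MInf
    then have "a1 = -\<infinity>" using le by simp
    then have "c = 0" using MInf by (simp add: c_def T_def Ioc_e_def)
    then show ?thesis using cpos by simp
  qed simp
  show ?thesis using lo hi by simp
qed


lemma Theta_iff:
  assumes "admissible_Theta \<Theta>"
  shows "x \<in> \<Theta> \<longleftrightarrow> Inf (ereal ` \<Theta>) \<le> ereal x \<and> ereal x \<le> Sup (ereal ` \<Theta>)"
proof
  assume "x \<in> \<Theta>" then show "Inf (ereal ` \<Theta>) \<le> ereal x \<and> ereal x \<le> Sup (ereal ` \<Theta>)"
    by (auto intro: Inf_lower Sup_upper)
next
  assume h: "Inf (ereal ` \<Theta>) \<le> ereal x \<and> ereal x \<le> Sup (ereal ` \<Theta>)"
  have lo: "a \<le> x" if "\<Theta> \<subseteq> {a..}" for a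
  proof -
    have "ereal a \<le> Inf (ereal ` \<Theta>)" using that by (auto intro!: Inf_greatest)
    then have "ereal a \<le> ereal x" using h order_trans by blast
    then show ?thesis by simp
  qed
  have up: "x \<le> a" if "\<Theta> \<subseteq> {..a}" for a
  proof -
    have "Sup (ereal ` \<Theta>) \<le> ereal a" using that by (auto intro!: Sup_least)
    then have "ereal x \<le> ereal a" using h order_trans by blast
    then show ?thesis by simp
  qed
  from assms show "x \<in> \<Theta>" unfolding admissible_Theta_def
  proof (elim disjE exE conjE)
    fix a assume "\<Theta> = {a..}" then show ?thesis using lo[of a] by simp
  next
    fix a assume "\<Theta> = {..a}" then show ?thesis using up[of a] by simp
  next
    fix a b assume "\<Theta> = {a..b}" then show ?thesis using lo[of a] up[of b] by simp
  qed simp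
qed

lemma Theta_ne: "admissible_Theta \<Theta> \<Longrightarrow> \<Theta> \<noteq> {}"
  unfolding admissible_Theta_def by auto

lemma Theta_borel: "admissible_Theta \<Theta> \<Longrightarrow> \<Theta> \<in> sets borel"
  unfolding admissible_Theta_def by auto

lemma Pr_AE:
  assumes "G \<in> Pr \<Theta>" "admissible_Theta \<Theta>"
  shows "AE x in G. x \<in> \<Theta>"
proof -
  have S: "sets G = sets borel" using assms by (simp add: Pr_def)
  have sp: "space G = UNIV" using S sets_eq_imp_space_eq by fastforce
  have "UNIV - \<Theta> \<in> sets G" using S Theta_borel[OF assms(2)] by auto
  then show ?thesis using assms(1) sp by (subst AE_iff_measurable[of "UNIV - \<Theta>"]) (auto simp: Pr_def)
qed

lemma mean_in:
  assumes G: "G \<in> Pr \<Theta>" and T: "admissible_Theta \<Theta>" and I: "integrable G (\<lambda>x. x)"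
  shows "(\<integral>x. x \<partial>G) \<in> \<Theta>"
proof -
  interpret prob_space G using G by (simp add: Pr_def)
  have AE: "AE x in G. x \<in> \<Theta>" by (rule Pr_AE[OF G T])
  have lo: "a \<le> (\<integral>x. x \<partial>G)" if "\<Theta> \<subseteq> {a..}" for a
  proof -
    have "(\<integral>x. a \<partial>G) \<le> (\<integral>x. x \<partial>G)"
      by (rule integral_mono_AE[OF integrable_const I]) (use AE that in auto)
    then show ?thesis by (simp add: prob_space)
  qed
  have up: "(\<integral>x. x \<partial>G) \<le> a" if "\<Theta> \<subseteq> {..a}" for a
  proof -
    have "(\<integral>x. x \<partial>G) \<le> (\<integral>x. a \<partial>G)"
      by (rule integral_mono_AE[OF I integrable_const]) (use AE that in auto)
    then show ?thesis by (simp add: prob_space)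
  qed
  from T show ?thesis unfolding admissible_Theta_def
  proof (elim disjE exE conjE)
    fix a assume "\<Theta> = {a..}" then show ?thesis using lo[of a] by simp
  next
    fix a assume "\<Theta> = {..a}" then show ?thesis using up[of a] by simp
  next
    fix a b assume "\<Theta> = {a..b}" then show ?thesis using lo[of a] up[of b] by simp
  qed simp
qed

lemma sba_0[simp]: "sba G \<Theta> r 0 = Inf (ereal ` \<Theta>)"
  by (cases r) auto

lemma sba_top[simp]: "sba G \<Theta> r (2 ^ r) = Sup (ereal ` \<Theta>)"
  by (cases r) auto

lemma sba_even: "i \<le> 2 ^ j \<Longrightarrow> sba G \<Theta> (Suc j) (2 * i) = sba G \<Theta> j i"
  by (cases "i = 0"; cases "i = 2 ^ j") auto

lemma sba_odd: "1 \<le> j \<Longrightarrow> sba G \<Theta> (Suc j) (2 * i + 1) = bary G (sba G \<Theta> j i) (sba G \<Theta> j (i + 1))"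
proof -
  assume j: "1 \<le> j"
  have "2 * i + 1 \<noteq> 2 ^ Suc j"
    by (metis even_Suc even_mult_iff even_numeral even_power zero_less_Suc Suc_eq_plus1)
  then show ?thesis using j by auto
qed

lemma sba_11: "sba G \<Theta> (Suc 0) 1 = ereal (\<integral>x. x \<partial>G)"
  by simp

lemma sba_scale: "l \<le> 2 ^ r \<Longrightarrow> sba G \<Theta> (r + m) (l * 2 ^ m) = sba G \<Theta> r l"
proof (induction m)
  case 0 then show ?case by simp
next
  case (Suc m)
  have "l * 2 ^ m \<le> 2 ^ (r + m)" using Suc.prems by (simp add: power_add)
  then have "sba G \<Theta> (Suc (r + m)) (2 * (l * 2 ^ m)) = sba G \<Theta> (r + m) (l * 2 ^ m)"
    by (rule sba_even)
  then show ?case using Suc by (simp add: mult_ac)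
qed



declare sba.simps(2)[simp del]
lemma sba_mono_step:
  assumes G: "G \<in> Pr \<Theta>" and T: "admissible_Theta \<Theta>" and I: "integrable G (\<lambda>x. x)"
  shows "l < 2 ^ r \<Longrightarrow> sba G \<Theta> r l \<le> sba G \<Theta> r (Suc l)"
proof (induction r arbitrary: l)
  case 0
  then have "l = 0" by simp
  have "Inf (ereal ` \<Theta>) \<le> Sup (ereal ` \<Theta>)" using Theta_ne[OF T] by (simp add: Inf_le_Sup)
  then show ?case using \<open>l = 0\<close> by simp
next
  case (Suc j l)
  have P: "prob_space G" and S: "sets G = sets borel" using G by (auto simp: Pr_def)
  have mi: "(\<integral>x. x \<partial>G) \<in> \<Theta>" by (rule mean_in[OF G T I])
  show ?case
  proof (cases "j = 0")
    case True
    then have "l = 0 \<or> l = 1" using Suc.prems by auto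
    moreover have "sba G \<Theta> (Suc 0) 1 = ereal (\<integral>x. x \<partial>G)" by (simp add: sba.simps)
    moreover have "sba G \<Theta> (Suc 0) (Suc (Suc 0)) = Sup (ereal ` \<Theta>)" using sba_top[of G \<Theta> 1] by (simp add: numeral_2_eq_2)
    moreover have "Inf (ereal ` \<Theta>) \<le> ereal (\<integral>x. x \<partial>G) \<and> ereal (\<integral>x. x \<partial>G) \<le> Sup (ereal ` \<Theta>)"
      using mi Theta_iff[OF T] by blast
    ultimately show ?thesis using True by (auto simp del: sba_top)
  next
    case False
    then have j1: "1 \<le> j" by simp
    show ?thesis
    proof (cases "even l")
      case True
      then obtain i where l: "l = 2 * i" by blast
      then have i: "i < 2 ^ j" using Suc.prems by simp
      have "sba G \<Theta> (Suc j) l = sba G \<Theta> j i" using l i by (simp add: sba_even)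
      moreover have "sba G \<Theta> (Suc j) (Suc l) = bary G (sba G \<Theta> j i) (sba G \<Theta> j (i + 1))"
        using sba_odd[OF j1, of G \<Theta> i] l by simp
      moreover have "sba G \<Theta> j i \<le> sba G \<Theta> j (i + 1)" using Suc.IH[OF i] by simp
      ultimately show ?thesis using bary_bounds[OF P S I] by simp
    next
      case False
      then obtain i where l: "l = 2 * i + 1" using oddE by blast
      then have i: "i < 2 ^ j" using Suc.prems by simp
      have "sba G \<Theta> (Suc j) l = bary G (sba G \<Theta> j i) (sba G \<Theta> j (i + 1))"
        using sba_odd[OF j1, of G \<Theta> i] l by simp
      moreover have "sba G \<Theta> (Suc j) (Suc l) = sba G \<Theta> j (i + 1)"
        using l i sba_even[of "i+1" j G \<Theta>] by simp
      moreover have "sba G \<Theta> j i \<le> sba G \<Theta> j (i + 1)" using Suc.IH[OF i] by simp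
      ultimately show ?thesis using bary_bounds[OF P S I] by simp
    qed
  qed
qed

lemma sba_mono_d:
  assumes G: "G \<in> Pr \<Theta>" and T: "admissible_Theta \<Theta>" and I: "integrable G (\<lambda>x. x)"
  shows "l1 + d \<le> 2 ^ r \<Longrightarrow> sba G \<Theta> r l1 \<le> sba G \<Theta> r (l1 + d)"
proof (induction d)
  case 0 then show ?case by simp
next
  case (Suc d)
  then have k: "l1 + d < 2 ^ r" by simp
  have "sba G \<Theta> r l1 \<le> sba G \<Theta> r (l1 + d)" using Suc.IH k by simp
  also have "\<dots> \<le> sba G \<Theta> r (Suc (l1 + d))" by (rule sba_mono_step[OF G T I k])
  finally show ?case by simp
qed

lemma sba_mono:
  assumes G: "G \<in> Pr \<Theta>" and T: "admissible_Theta \<Theta>" and I: "integrable G (\<lambda>x. x)"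
  shows "l1 \<le> l2 \<Longrightarrow> l2 \<le> 2 ^ r \<Longrightarrow> sba G \<Theta> r l1 \<le> sba G \<Theta> r l2"
  using sba_mono_d[OF G T I, of l1 "l2 - l1" r] by simp



declare sba.simps(2)[simp del]

lemma RBC_E:
  assumes "A \<in> RBC n \<Theta>"
  obtains G where "G \<in> Pr \<Theta>" "integrable G (\<lambda>x. x)" "regular_sba G \<Theta> n"
    "\<And>r i. 1 \<le> r \<Longrightarrow> r \<le> n + 1 \<Longrightarrow> 1 \<le> i \<Longrightarrow> i \<le> 2 ^ r - 1 \<Longrightarrow> ereal (A (r, i)) = sba G \<Theta> r i"
  using assms unfolding RBC_def idx_def by fastforce

lemma RBC_mono:
  assumes A: "A \<in> RBC n \<Theta>" and T: "admissible_Theta \<Theta>"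
    and r: "1 \<le> r" "r \<le> n + 1" and i: "1 \<le> i" "i \<le> i'" "i' \<le> 2 ^ r - 1"
  shows "A (r, i) \<le> A (r, i')"
proof -
  obtain G where G: "G \<in> Pr \<Theta>" "integrable G (\<lambda>x. x)"
    and E: "\<And>r i. 1 \<le> r \<Longrightarrow> r \<le> n + 1 \<Longrightarrow> 1 \<le> i \<Longrightarrow> i \<le> 2 ^ r - 1 \<Longrightarrow> ereal (A (r, i)) = sba G \<Theta> r i"
    using RBC_E[OF A] by metis
  have "sba G \<Theta> r i \<le> sba G \<Theta> r i'" using sba_mono[OF G(1) T G(2), of i i' r] i by simp
  moreover have "ereal (A (r, i)) = sba G \<Theta> r i" "ereal (A (r, i')) = sba G \<Theta> r i'"
    using E[OF r, of i] E[OF r, of i'] i by simp_all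
  ultimately show ?thesis by (metis ereal_less_eq(3))
qed

lemma RBC_in_Theta:
  assumes A: "A \<in> RBC n \<Theta>" and T: "admissible_Theta \<Theta>"
    and r: "1 \<le> r" "r \<le> n + 1" and i: "1 \<le> i" "i \<le> 2 ^ r - 1"
  shows "A (r, i) \<in> \<Theta>"
proof -
  obtain G where G: "G \<in> Pr \<Theta>" "integrable G (\<lambda>x. x)"
    and E: "\<And>r i. 1 \<le> r \<Longrightarrow> r \<le> n + 1 \<Longrightarrow> 1 \<le> i \<Longrightarrow> i \<le> 2 ^ r - 1 \<Longrightarrow> ereal (A (r, i)) = sba G \<Theta> r i"
    using RBC_E[OF A] by metis
  have "sba G \<Theta> r 0 \<le> sba G \<Theta> r i" using sba_mono[OF G(1) T G(2), of 0 i r] i by simp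
  moreover have "sba G \<Theta> r i \<le> sba G \<Theta> r (2 ^ r)" using sba_mono[OF G(1) T G(2), of i "2^r" r] i by simp
  ultimately show ?thesis using E[OF r i] Theta_iff[OF T, of "A (r, i)"] by simp
qed

lemma RBC_distinct:
  assumes A: "A \<in> RBC n \<Theta>"
    and r: "1 \<le> r" "r \<le> n" and i: "1 \<le> i" "i < 2 ^ r" "1 \<le> i'" "i' < 2 ^ r" "i \<noteq> i'"
  shows "A (r, i) \<noteq> A (r, i')"
proof -
  obtain G where reg: "regular_sba G \<Theta> n"
    and E: "\<And>r i. 1 \<le> r \<Longrightarrow> r \<le> n + 1 \<Longrightarrow> 1 \<le> i \<Longrightarrow> i \<le> 2 ^ r - 1 \<Longrightarrow> ereal (A (r, i)) = sba G \<Theta> r i"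
    using RBC_E[OF A] by metis
  define m where "m = n - r"
  have nm: "n = r + m" using r m_def by simp
  have sc: "sba G \<Theta> r x = sba G \<Theta> n (x * 2 ^ m)" if "x < 2 ^ r" for x
    using sba_scale[of x r G \<Theta> m] that nm by simp
  have b: "x * 2 ^ m < 2 ^ n" if "x < 2 ^ r" for x :: nat
    using that nm by (simp add: power_add)
  have p: "1 \<le> x * 2 ^ m" if "1 \<le> x" for x :: nat
    using that by (simp add: Suc_le_eq)
  have d: "i * 2 ^ m \<noteq> i' * 2 ^ m" using i by simp
  have "sba G \<Theta> n (i * 2 ^ m) \<noteq> sba G \<Theta> n (i' * 2 ^ m)"
    using reg unfolding regular_sba_def using b[of i] b[of i'] p[of i] p[of i'] i d by fastforce
  then have "sba G \<Theta> r i \<noteq> sba G \<Theta> r i'" using sc i by simp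
  then show ?thesis using E[of r i] E[of r i'] r i by fastforce
qed

lemma qt_bounds: "0 \<le> a \<Longrightarrow> a \<le> b \<Longrightarrow> 0 \<le> qt a b \<and> qt a b \<le> 1"
  unfolding qt_def by auto

lemma Fv_0[simp]: "Fv A j 0 = 0"
  by (cases j) auto

lemma Fv_top[simp]: "Fv A j (2 ^ j) = 1"
  by (cases j) auto

declare Fv.simps(2)[simp del]

lemma Fv_even: "i \<le> 2 ^ j \<Longrightarrow> Fv A (Suc j) (2 * i) = Fv A j i"
  by (cases "i = 0"; cases "i = 2 ^ j") (auto simp: Fv.simps)

definition qq :: "(nat \<times> nat \<Rightarrow> real) \<Rightarrow> nat \<Rightarrow> nat \<Rightarrow> real" where
  "qq A j i = qt (A (j + 2, 4 * i + 3) - A (j + 2, 4 * i + 2)) (A (j + 2, 4 * i + 3) - A (j + 2, 4 * i + 1))"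

lemma Fv_odd: "Fv A (Suc j) (2 * i + 1) = Fv A j i + (Fv A j (i + 1) - Fv A j i) * qq A j i"
proof -
  have "2 * i + 1 \<noteq> 2 ^ Suc j"
    by (metis even_Suc even_mult_iff even_numeral even_power zero_less_Suc Suc_eq_plus1)
  moreover have "4 * (i + 1) - 1 = 4 * i + 3" "4 * (i + 1) - 2 = 4 * i + 2" "4 * (i + 1) - 3 = 4 * i + 1"
    by simp_all
  ultimately show ?thesis by (simp add: Fv.simps qq_def Let_def add.commute)
qed

lemma qq_bounds:
  assumes A: "A \<in> RBC n \<Theta>" and T: "admissible_Theta \<Theta>" and j: "j + 1 \<le> n" and i: "i < 2 ^ j"
  shows "0 \<le> qq A j i \<and> qq A j i \<le> 1"
proof -
  have b: "4 * i + 3 \<le> 2 ^ (j + 2) - 1" using i by (simp add: power_add)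
  have "A (j + 2, 4 * i + 1) \<le> A (j + 2, 4 * i + 2)" "A (j + 2, 4 * i + 2) \<le> A (j + 2, 4 * i + 3)"
    using RBC_mono[OF A T, of "j+2"] j b by simp_all
  then show ?thesis unfolding qq_def by (intro qt_bounds) simp_all
qed

lemma Fv_mono_step:
  assumes A: "A \<in> RBC n \<Theta>" and T: "admissible_Theta \<Theta>"
  shows "j \<le> n \<Longrightarrow> l < 2 ^ j \<Longrightarrow> Fv A j l \<le> Fv A j (Suc l)"
proof (induction j arbitrary: l)
  case 0 then show ?case by simp
next
  case (Suc j l)
  show ?case
  proof (cases "even l")
    case True
    then obtain i where l: "l = 2 * i" by blast
    then have i: "i < 2 ^ j" using Suc.prems by simp
    have D: "Fv A j i \<le> Fv A j (i + 1)" using Suc.IH[of i] Suc.prems i by simp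
    have q: "0 \<le> qq A j i" using qq_bounds[OF A T, of j i] Suc.prems i by simp
    have "Fv A (Suc j) l = Fv A j i" using l i by (simp add: Fv_even)
    moreover have "Fv A (Suc j) (Suc l) = Fv A j i + (Fv A j (i + 1) - Fv A j i) * qq A j i"
      using Fv_odd[of A j i] l by simp
    ultimately show ?thesis using D q by simp
  next
    case False
    then obtain i where l: "l = 2 * i + 1" using oddE by blast
    then have i: "i < 2 ^ j" using Suc.prems by simp
    have D: "Fv A j i \<le> Fv A j (i + 1)" using Suc.IH[of i] Suc.prems i by simp
    have q: "qq A j i \<le> 1" using qq_bounds[OF A T, of j i] Suc.prems i by simp
    have "Fv A (Suc j) l = Fv A j i + (Fv A j (i + 1) - Fv A j i) * qq A j i"
      using Fv_odd[of A j i] l by simp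
    moreover have "Fv A (Suc j) (Suc l) = Fv A j (i + 1)"
      using l i Fv_even[of "i+1" j A] by simp
    moreover have "(Fv A j (i + 1) - Fv A j i) * qq A j i \<le> (Fv A j (i + 1) - Fv A j i) * 1"
      using D q by (intro mult_left_mono) simp_all
    ultimately show ?thesis by simp
  qed
qed

lemma wts_nonneg:
  assumes A: "A \<in> RBC n \<Theta>" and T: "admissible_Theta \<Theta>" and l: "l \<in> {1..2 ^ n}"
  shows "0 \<le> wts n A l"
proof -
  have "Suc (l - 1) = l" using l by simp
  then show ?thesis using Fv_mono_step[OF A T, of n "l - 1"] l by (simp add: wts_def)
qed

lemma telescope: "(\<Sum>l\<in>{1..N::nat}. f l - f (l - 1)) = (f N - f 0 :: real)"
  by (induction N) (simp_all add: atLeastAtMostSuc_conv)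

lemma wts_sum: "(\<Sum>l\<in>{1..2 ^ n}. wts n A l) = 1"
  unfolding wts_def by (subst telescope) simp

lemma Tn_Pr:
  assumes A: "A \<in> RBC n \<Theta>" and T: "admissible_Theta \<Theta>"
  shows "Tn n A \<in> Pr \<Theta>"
proof -
  have nn: "\<And>l. l \<in> {1..2 ^ n} \<Longrightarrow> 0 \<le> wts n A l" using wts_nonneg[OF A T] by blast
  have "emeasure (Dm n A) UNIV = (\<Sum>l\<in>{1..2 ^ n}. ennreal (wts n A l))"
    by (simp add: emeasure_Dm)
  also have "\<dots> = ennreal (\<Sum>l\<in>{1..2 ^ n}. wts n A l)" by (rule sum_ennreal[OF nn])
  finally have "emeasure (Dm n A) (space (Dm n A)) = 1" using wts_sum[of n A] by simp
  then have P: "prob_space (Dm n A)" by (rule prob_spaceI)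
  have inT: "A (n + 1, 2 * l - 1) \<in> \<Theta>" if "l \<in> {1..2 ^ n}" for l
  proof -
    have "2 * l \<le> 2 * 2 ^ n" using that by simp
    then have "2 * l - 1 \<le> 2 ^ (n + 1) - 1" by simp
    moreover have "1 \<le> 2 * l - 1" using that by auto
    ultimately show ?thesis using RBC_in_Theta[OF A T, of "n+1" "2*l-1"] that by simp
  qed
  have "emeasure (Dm n A) (UNIV - \<Theta>) = (\<Sum>l\<in>{1..2 ^ n}. ennreal (wts n A l) * indicator (UNIV - \<Theta>) (A (n + 1, 2 * l - 1)))"
    using Theta_borel[OF T] by (subst emeasure_Dm) auto
  also have "\<dots> = 0" using inT by (intro sum.neutral) simp
  finally show ?thesis using P by (simp add: Pr_def Tn_eq)
qed

lemma integral_Tn: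
  assumes A: "A \<in> RBC n \<Theta>" and T: "admissible_Theta \<Theta>" and f: "continuous_on UNIV f"
  shows "(\<integral>x. f x \<partial>Tn n A) = (\<Sum>l\<in>{1..2 ^ n}. wts n A l * f (A (n + 1, 2 * l - 1)))"
    "integrable (Tn n A) f"
proof -
  have nn: "\<And>l. l \<in> {1..2 ^ n} \<Longrightarrow> 0 \<le> wts n A l" using wts_nonneg[OF A T] by blast
  have fm: "f \<in> borel_measurable borel" using f by (rule borel_measurable_continuous_onI)
  show "(\<integral>x. f x \<partial>Tn n A) = (\<Sum>l\<in>{1..2 ^ n}. wts n A l * f (A (n + 1, 2 * l - 1)))"
    unfolding Tn_eq by (rule integral_Dm[OF nn fm])
  show "integrable (Tn n A) f"
    unfolding Tn_eq by (rule integrable_Dm[OF nn fm])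
qed



lemma pair_cont:
  fixes \<alpha> \<beta> \<gamma> :: "'a::topological_space \<Rightarrow> real" and f :: "real \<Rightarrow> real"
  assumes ca: "continuous_on S \<alpha>" and cb: "continuous_on S \<beta>" and cc: "continuous_on S \<gamma>"
    and f: "continuous_on UNIV f"
    and ord: "\<And>x. x \<in> S \<Longrightarrow> \<alpha> x \<le> \<beta> x \<and> \<beta> x \<le> \<gamma> x"
  shows "continuous_on S (\<lambda>x. qt (\<gamma> x - \<beta> x) (\<gamma> x - \<alpha> x) * (f (\<alpha> x) - f (\<gamma> x)))"
  unfolding continuous_on_def
proof
  fix x0 assume x0: "x0 \<in> S"
  define F where "F = at x0 within S"
  define q where "q x = qt (\<gamma> x - \<beta> x) (\<gamma> x - \<alpha> x)" for x
  have ta: "(\<alpha> \<longlongrightarrow> \<alpha> x0) F" using ca x0 unfolding continuous_on_def F_def by blast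
  have tb: "(\<beta> \<longlongrightarrow> \<beta> x0) F" using cb x0 unfolding continuous_on_def F_def by blast
  have tc: "(\<gamma> \<longlongrightarrow> \<gamma> x0) F" using cc x0 unfolding continuous_on_def F_def by blast
  have fa: "((\<lambda>x. f (\<alpha> x)) \<longlongrightarrow> f (\<alpha> x0)) F"
    using f ta by (metis UNIV_I continuous_on_def tendsto_at_iff_tendsto_nhds tendsto_compose)
  have fc: "((\<lambda>x. f (\<gamma> x)) \<longlongrightarrow> f (\<gamma> x0)) F"
    using f tc by (metis UNIV_I continuous_on_def tendsto_at_iff_tendsto_nhds tendsto_compose)
  have d: "((\<lambda>x. f (\<alpha> x) - f (\<gamma> x)) \<longlongrightarrow> f (\<alpha> x0) - f (\<gamma> x0)) F"
    using fa fc by (rule tendsto_diff)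
  have evS: "eventually (\<lambda>x. x \<in> S) F" unfolding F_def eventually_at_filter by simp
  have main: "((\<lambda>x. q x * (f (\<alpha> x) - f (\<gamma> x))) \<longlongrightarrow> q x0 * (f (\<alpha> x0) - f (\<gamma> x0))) F"
  proof (cases "\<alpha> x0 = \<gamma> x0")
    case True
    have "((\<lambda>x. q x * (f (\<alpha> x) - f (\<gamma> x))) \<longlongrightarrow> 0) F"
    proof (rule Lim_null_comparison)
      show "eventually (\<lambda>x. norm (q x * (f (\<alpha> x) - f (\<gamma> x))) \<le> \<bar>f (\<alpha> x) - f (\<gamma> x)\<bar>) F"
        using evS
      proof eventually_elim
        case (elim x)
        have "0 \<le> q x \<and> q x \<le> 1" unfolding q_def using ord[OF elim] by (intro qt_bounds) auto
        then show ?case by (simp add: abs_mult mult_left_le_one_le)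
      qed
      show "((\<lambda>x. \<bar>f (\<alpha> x) - f (\<gamma> x)\<bar>) \<longlongrightarrow> 0) F"
        using tendsto_rabs[OF d] True by simp
    qed
    then show ?thesis using True by simp
  next
    case False
    have ne: "\<gamma> x0 - \<alpha> x0 \<noteq> 0" using False by simp
    have tq: "((\<lambda>x. (\<gamma> x - \<beta> x) / (\<gamma> x - \<alpha> x)) \<longlongrightarrow> q x0) F"
    proof -
      have "((\<lambda>x. (\<gamma> x - \<beta> x) / (\<gamma> x - \<alpha> x)) \<longlongrightarrow> (\<gamma> x0 - \<beta> x0) / (\<gamma> x0 - \<alpha> x0)) F"
        by (intro tendsto_intros tc tb ta ne)
      then show ?thesis using ne by (simp add: q_def qt_def)
    qed
    have ev: "eventually (\<lambda>x. \<gamma> x - \<alpha> x \<noteq> 0) F"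
      using tendsto_diff[OF tc ta] ne by (rule tendsto_imp_eventually_ne)
    have "(q \<longlongrightarrow> q x0) F"
      using tq ev by (rule Lim_transform_eventually[OF _ eventually_mono]) (simp add: q_def qt_def)
    then show ?thesis by (intro tendsto_mult d)
  qed
  then show "((\<lambda>x. qt (\<gamma> x - \<beta> x) (\<gamma> x - \<alpha> x) * (f (\<alpha> x) - f (\<gamma> x))) \<longlongrightarrow>
      qt (\<gamma> x0 - \<beta> x0) (\<gamma> x0 - \<alpha> x0) * (f (\<alpha> x0) - f (\<gamma> x0))) (at x0 within S)"
    unfolding q_def F_def .
qed

lemma coord_cont[continuous_intros]: "continuous_on S (\<lambda>A::(nat \<times> nat \<Rightarrow> real). A i)"
  by (rule continuous_on_subset[OF continuous_on_product_coordinates]) simp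

lemma qq_cont:
  assumes j: "j + 2 \<le> n" and i: "i < 2 ^ j"
  shows "continuous_on (RBC n \<Theta>) (\<lambda>A. qq A j i)"
proof -
  have b: "4 * i + 3 < 2 ^ (j + 2)" using i by (simp add: power_add)
  have ne: "A (j + 2, 4 * i + 3) - A (j + 2, 4 * i + 1) \<noteq> 0" if "A \<in> RBC n \<Theta>" for A
    using RBC_distinct[OF that, of "j+2" "4*i+3" "4*i+1"] j b by simp
  have "continuous_on (RBC n \<Theta>) (\<lambda>A. (A (j + 2, 4 * i + 3) - A (j + 2, 4 * i + 2)) /
      (A (j + 2, 4 * i + 3) - A (j + 2, 4 * i + 1)))"
    using ne by (intro continuous_intros) auto
  then show ?thesis
    by (rule continuous_on_eq) (use ne in \<open>auto simp: qq_def qt_def\<close>)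
qed

lemma Fv_cont:
  "j + 1 \<le> n \<Longrightarrow> l \<le> 2 ^ j \<Longrightarrow> continuous_on (RBC n \<Theta>) (\<lambda>A. Fv A j l)"
proof (induction j arbitrary: l)
  case 0
  then show ?case by (simp add: continuous_on_const)
next
  case (Suc j l)
  show ?case
  proof (cases "even l")
    case True
    then obtain i where l: "l = 2 * i" by blast
    then have i: "i \<le> 2 ^ j" using Suc.prems by simp
    have "continuous_on (RBC n \<Theta>) (\<lambda>A. Fv A j i)" using Suc.IH[OF _ i] Suc.prems by simp
    then show ?thesis using l i by (simp add: Fv_even)
  next
    case False
    then obtain i where l: "l = 2 * i + 1" using oddE by blast
    then have i: "i < 2 ^ j" using Suc.prems by simp
    have c1: "continuous_on (RBC n \<Theta>) (\<lambda>A. Fv A j i)" using Suc.IH[of i] Suc.prems i by simp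
    have c2: "continuous_on (RBC n \<Theta>) (\<lambda>A. Fv A j (i + 1))" using Suc.IH[of "i+1"] Suc.prems i by simp
    have c3: "continuous_on (RBC n \<Theta>) (\<lambda>A. qq A j i)" using qq_cont[of j n i \<Theta>] Suc.prems i by simp
    have "continuous_on (RBC n \<Theta>) (\<lambda>A. Fv A j i + (Fv A j (i + 1) - Fv A j i) * qq A j i)"
      by (intro continuous_intros c1 c2 c3)
    then show ?thesis unfolding l Fv_odd .
  qed
qed

lemma sum_pairs: "(\<Sum>l\<in>{1..2 * N}. g l) = (\<Sum>i<N. g (2 * i + 1) + g (2 * i + 2) :: real)"
  for N :: nat
proof (induction N)
  case 0 then show ?case by simp
next
  case (Suc N)
  have "{1..2 * Suc N} = insert (2 * N + 2) (insert (2 * N + 1) {1..2 * N})" by auto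
  then show ?case using Suc by (simp add: add.commute)
qed

lemma Sf_split:
  "(\<Sum>l\<in>{1..2 ^ Suc m}. wts (Suc m) A l * f (A (Suc m + 1, 2 * l - 1))) =
   (\<Sum>i<2 ^ m. (Fv A m (i + 1) - Fv A m i) *
      (f (A (m + 2, 4 * i + 3)) + qq A m i * (f (A (m + 2, 4 * i + 1)) - f (A (m + 2, 4 * i + 3)))))"
proof -
  have "(\<Sum>l\<in>{1..2 ^ Suc m}. wts (Suc m) A l * f (A (Suc m + 1, 2 * l - 1))) =
     (\<Sum>i<2 ^ m. wts (Suc m) A (2 * i + 1) * f (A (Suc m + 1, 2 * (2 * i + 1) - 1)) +
                wts (Suc m) A (2 * i + 2) * f (A (Suc m + 1, 2 * (2 * i + 2) - 1)))"
    using sum_pairs[of "\<lambda>l. wts (Suc m) A l * f (A (Suc m + 1, 2 * l - 1))" "2 ^ m"] by simp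
  also have "\<dots> = (\<Sum>i<2 ^ m. (Fv A m (i + 1) - Fv A m i) *
      (f (A (m + 2, 4 * i + 3)) + qq A m i * (f (A (m + 2, 4 * i + 1)) - f (A (m + 2, 4 * i + 3)))))"
  proof (rule sum.cong)
    fix i :: nat assume "i \<in> {..<2 ^ m}"
    then have i: "i < 2 ^ m" by simp
    have w1: "wts (Suc m) A (2 * i + 1) = (Fv A m (i + 1) - Fv A m i) * qq A m i"
      unfolding wts_def using Fv_odd[of A m i] Fv_even[of i m A] i by simp
    have e2: "Fv A (Suc m) (2 * i + 2) = Fv A m (i + 1)"
      using Fv_even[of "i + 1" m A] i by simp
    have w2: "wts (Suc m) A (2 * i + 2) = (Fv A m (i + 1) - Fv A m i) * (1 - qq A m i)"
      unfolding wts_def using Fv_odd[of A m i] e2 by (simp add: algebra_simps)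
    have x1: "2 * (2 * i + 1) - 1 = 4 * i + 1" and x2: "2 * (2 * i + 2) - 1 = 4 * i + 3" by simp_all
    show "wts (Suc m) A (2 * i + 1) * f (A (Suc m + 1, 2 * (2 * i + 1) - 1)) +
        wts (Suc m) A (2 * i + 2) * f (A (Suc m + 1, 2 * (2 * i + 2) - 1)) =
        (Fv A m (i + 1) - Fv A m i) *
      (f (A (m + 2, 4 * i + 3)) + qq A m i * (f (A (m + 2, 4 * i + 1)) - f (A (m + 2, 4 * i + 3))))"
      unfolding w1 w2 x1 x2 by (simp add: algebra_simps)
  qed simp
  finally show ?thesis .
qed



lemma fcoord_cont: "continuous_on UNIV f \<Longrightarrow> continuous_on S (\<lambda>A::(nat \<times> nat \<Rightarrow> real). f (A i) :: real)"
  by (rule continuous_on_compose2[OF _ coord_cont]) auto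

lemma Sf_cont:
  assumes T: "admissible_Theta \<Theta>" and f: "continuous_on UNIV f"
  shows "continuous_on (RBC n \<Theta>) (\<lambda>A. \<Sum>l\<in>{1..2 ^ n}. wts n A l * f (A (n + 1, 2 * l - 1)))"
proof (cases n)
  case 0
  have "continuous_on (RBC n \<Theta>) (\<lambda>A. f (A (1, 1)))" by (rule fcoord_cont[OF f])
  then show ?thesis using 0 by (simp add: wts_def)
next
  case (Suc m)
  have "continuous_on (RBC n \<Theta>) (\<lambda>A. \<Sum>i<2 ^ m. (Fv A m (i + 1) - Fv A m i) *
      (f (A (m + 2, 4 * i + 3)) + qq A m i * (f (A (m + 2, 4 * i + 1)) - f (A (m + 2, 4 * i + 3)))))"
  proof (intro continuous_on_sum)
    fix i assume "i \<in> {..<(2::nat) ^ m}"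
    then have i: "i < 2 ^ m" by simp
    have D: "continuous_on (RBC n \<Theta>) (\<lambda>A. Fv A m (i + 1) - Fv A m i)"
      using Fv_cont[of m n "i + 1" \<Theta>] Fv_cont[of m n i \<Theta>] Suc i by (intro continuous_intros) auto
    have b: "4 * i + 3 \<le> 2 ^ (m + 2) - 1" using i by (simp add: power_add)
    have ord: "A (m + 2, 4 * i + 1) \<le> A (m + 2, 4 * i + 2) \<and> A (m + 2, 4 * i + 2) \<le> A (m + 2, 4 * i + 3)"
      if "A \<in> RBC n \<Theta>" for A
      using RBC_mono[OF that T, of "m+2"] Suc b by simp
    have pc: "continuous_on (RBC n \<Theta>) (\<lambda>A. qt (A (m + 2, 4 * i + 3) - A (m + 2, 4 * i + 2))
        (A (m + 2, 4 * i + 3) - A (m + 2, 4 * i + 1)) * (f (A (m + 2, 4 * i + 1)) - f (A (m + 2, 4 * i + 3))))"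
      by (rule pair_cont[OF coord_cont coord_cont coord_cont f ord])
    have "continuous_on (RBC n \<Theta>) (\<lambda>A. (Fv A m (i + 1) - Fv A m i) *
      (f (A (m + 2, 4 * i + 3)) + qt (A (m + 2, 4 * i + 3) - A (m + 2, 4 * i + 2))
        (A (m + 2, 4 * i + 3) - A (m + 2, 4 * i + 1)) * (f (A (m + 2, 4 * i + 1)) - f (A (m + 2, 4 * i + 3)))))"
      by (intro continuous_on_mult D continuous_on_add fcoord_cont[OF f] pc)
    then show "continuous_on (RBC n \<Theta>) (\<lambda>A. (Fv A m (i + 1) - Fv A m i) *
      (f (A (m + 2, 4 * i + 3)) + qq A m i * (f (A (m + 2, 4 * i + 1)) - f (A (m + 2, 4 * i + 3)))))"
      unfolding qq_def by simp
  qed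
  then show ?thesis using Suc Sf_split[of m A f for A] by simp
qed

lemma int_cont:
  fixes f :: "real \<Rightarrow> real"
  assumes T: "admissible_Theta \<Theta>" and f: "continuous_on UNIV f"
  shows "continuous_on (RBC n \<Theta>) (\<lambda>A. \<integral>x. f x \<partial>Tn n A)"
  by (rule continuous_on_eq[OF Sf_cont[OF T f]]) (simp add: integral_Tn(1)[OF _ T f])

lemma open_pre:
  fixes f :: "real \<Rightarrow> real" and c e :: real
  assumes T: "admissible_Theta \<Theta>" and f: "continuous_on UNIV f"
    and P: "\<And>A. A \<in> RBC n \<Theta> \<Longrightarrow> Tn n A \<in> P"
  shows "openin (top_of_set (RBC n \<Theta>))
     (Tn n -` {G \<in> P. \<bar>(\<integral>x. f x \<partial>G) - c\<bar> < e} \<inter> topspace (top_of_set (RBC n \<Theta>)))"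
proof -
  have eq: "Tn n -` {G \<in> P. \<bar>(\<integral>x. f x \<partial>G) - c\<bar> < e} \<inter> topspace (top_of_set (RBC n \<Theta>)) =
      RBC n \<Theta> \<inter> (\<lambda>A. \<integral>x. f x \<partial>Tn n A) -` {y. \<bar>y - c\<bar> < e}"
    using P by auto
  have o: "open {y::real. \<bar>y - c\<bar> < e}"
    by (rule open_Collect_less) (intro continuous_intros)+
  show ?thesis unfolding eq by (rule continuous_openin_preimage_gen[OF int_cont[OF T f] o])
qed

theorem lemma8:
  fixes \<Theta> :: "real set" and n :: nat
  assumes "admissible_Theta \<Theta>"
  shows "continuous_map (subtopology euclidean (RBC n \<Theta>)) (weak_top \<Theta>) (Tn n) \<and>
         (\<forall>p::real. p \<ge> 1 \<longrightarrow>
           continuous_map (subtopology euclidean (RBC n \<Theta>)) (wass_top \<Theta> p) (Tn n))"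
proof
  have T: "admissible_Theta \<Theta>" by fact
  have PrT: "\<And>A. A \<in> RBC n \<Theta> \<Longrightarrow> Tn n A \<in> Pr \<Theta>" using Tn_Pr[OF _ T] by blast
  have bc0: "bcont (\<lambda>_. 0)" by (simp add: bcont_def continuous_on_const)
  show "continuous_map (subtopology euclidean (RBC n \<Theta>)) (weak_top \<Theta>) (Tn n)"
    unfolding weak_top_def
  proof (rule continuous_on_generated_topo)
    fix U assume "U \<in> {{G \<in> Pr \<Theta>. \<bar>(\<integral>x. f x \<partial>G) - (\<integral>x. f x \<partial>G0)\<bar> < e} | f G0 e.
        bcont f \<and> G0 \<in> Pr \<Theta> \<and> e > 0}"
    then obtain f G0 e where U: "U = {G \<in> Pr \<Theta>. \<bar>(\<integral>x. f x \<partial>G) - (\<integral>x. f x \<partial>G0)\<bar> < e}"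
      and f: "bcont f" by blast
    have fc: "continuous_on UNIV f" using f by (simp add: bcont_def)
    show "openin (top_of_set (RBC n \<Theta>)) (Tn n -` U \<inter> topspace (top_of_set (RBC n \<Theta>)))"
      unfolding U by (rule open_pre[OF T fc PrT])
  next
    show "Tn n ` topspace (top_of_set (RBC n \<Theta>)) \<subseteq> \<Union> {{G \<in> Pr \<Theta>. \<bar>(\<integral>x. f x \<partial>G) - (\<integral>x. f x \<partial>G0)\<bar> < e} | f G0 e.
        bcont f \<and> G0 \<in> Pr \<Theta> \<and> e > 0}"
    proof
      fix G assume "G \<in> Tn n ` topspace (top_of_set (RBC n \<Theta>))"
      then obtain A where A: "A \<in> RBC n \<Theta>" and G: "G = Tn n A" by auto
      have m1: "G \<in> {G' \<in> Pr \<Theta>. \<bar>(\<integral>x. (\<lambda>_. 0::real) x \<partial>G') - (\<integral>x. (\<lambda>_. 0::real) x \<partial>G)\<bar> < 1}"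
        using PrT[OF A] G by simp
      have m2: "{G' \<in> Pr \<Theta>. \<bar>(\<integral>x. (\<lambda>_. 0::real) x \<partial>G') - (\<integral>x. (\<lambda>_. 0::real) x \<partial>G)\<bar> < 1} \<in>
        {{G \<in> Pr \<Theta>. \<bar>(\<integral>x. f x \<partial>G) - (\<integral>x. f x \<partial>G0)\<bar> < e} | f G0 e.
        bcont f \<and> G0 \<in> Pr \<Theta> \<and> e > 0}"
        by (intro CollectI exI[of _ "\<lambda>_. 0::real"] exI[of _ G] exI[of _ "1::real"] conjI refl)
          (use bc0 PrT[OF A] G in simp_all)
      show "G \<in> \<Union> {{G \<in> Pr \<Theta>. \<bar>(\<integral>x. f x \<partial>G) - (\<integral>x. f x \<partial>G0)\<bar> < e} | f G0 e.
        bcont f \<and> G0 \<in> Pr \<Theta> \<and> e > 0}"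
        by (rule UnionI[OF m2 m1])
    qed
  qed
  show "\<forall>p::real. p \<ge> 1 \<longrightarrow> continuous_map (subtopology euclidean (RBC n \<Theta>)) (wass_top \<Theta> p) (Tn n)"
  proof (intro allI impI)
    fix p :: real assume p: "p \<ge> 1"
    have pc: "continuous_on UNIV (\<lambda>x::real. \<bar>x\<bar> powr p)"
      using p by (intro continuous_on_powr' continuous_intros) auto
    have PrpT: "Tn n A \<in> Pr_p \<Theta> p" if A: "A \<in> RBC n \<Theta>" for A
      using PrT[OF A] integral_Tn(2)[OF A T pc] by (simp add: Pr_p_def)
    show "continuous_map (subtopology euclidean (RBC n \<Theta>)) (wass_top \<Theta> p) (Tn n)"
      unfolding wass_top_def
    proof (rule continuous_on_generated_topo)
      fix U assume "U \<in> {{G \<in> Pr_p \<Theta> p. \<bar>(\<integral>x. f x \<partial>G) - (\<integral>x. f x \<partial>G0)\<bar> < e} | f G0 e.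
        bcont f \<and> G0 \<in> Pr_p \<Theta> p \<and> e > 0} \<union>
      {{G \<in> Pr_p \<Theta> p. \<bar>(\<integral>x. \<bar>x\<bar> powr p \<partial>G) - (\<integral>x. \<bar>x\<bar> powr p \<partial>G0)\<bar> < e} | G0 e.
        G0 \<in> Pr_p \<Theta> p \<and> e > 0}"
      then show "openin (top_of_set (RBC n \<Theta>)) (Tn n -` U \<inter> topspace (top_of_set (RBC n \<Theta>)))"
      proof
        assume "U \<in> {{G \<in> Pr_p \<Theta> p. \<bar>(\<integral>x. f x \<partial>G) - (\<integral>x. f x \<partial>G0)\<bar> < e} | f G0 e.
          bcont f \<and> G0 \<in> Pr_p \<Theta> p \<and> e > 0}"
        then obtain f G0 e where U: "U = {G \<in> Pr_p \<Theta> p. \<bar>(\<integral>x. f x \<partial>G) - (\<integral>x. f x \<partial>G0)\<bar> < e}"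
          and f: "bcont f" by blast
        have fc: "continuous_on UNIV f" using f by (simp add: bcont_def)
        show ?thesis unfolding U by (rule open_pre[OF T fc PrpT])
      next
        assume "U \<in> {{G \<in> Pr_p \<Theta> p. \<bar>(\<integral>x. \<bar>x\<bar> powr p \<partial>G) - (\<integral>x. \<bar>x\<bar> powr p \<partial>G0)\<bar> < e} | G0 e.
          G0 \<in> Pr_p \<Theta> p \<and> e > 0}"
        then obtain G0 e where U: "U = {G \<in> Pr_p \<Theta> p. \<bar>(\<integral>x. \<bar>x\<bar> powr p \<partial>G) - (\<integral>x. \<bar>x\<bar> powr p \<partial>G0)\<bar> < e}"
          by blast
        show ?thesis unfolding U by (rule open_pre[OF T pc PrpT])
      qed
    next
      show "Tn n ` topspace (top_of_set (RBC n \<Theta>)) \<subseteq> \<Union> ({{G \<in> Pr_p \<Theta> p. \<bar>(\<integral>x. f x \<partial>G) - (\<integral>x. f x \<partial>G0)\<bar> < e} | f G0 e.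
        bcont f \<and> G0 \<in> Pr_p \<Theta> p \<and> e > 0} \<union>
      {{G \<in> Pr_p \<Theta> p. \<bar>(\<integral>x. \<bar>x\<bar> powr p \<partial>G) - (\<integral>x. \<bar>x\<bar> powr p \<partial>G0)\<bar> < e} | G0 e.
        G0 \<in> Pr_p \<Theta> p \<and> e > 0})"
      proof
        fix G assume "G \<in> Tn n ` topspace (top_of_set (RBC n \<Theta>))"
        then obtain A where A: "A \<in> RBC n \<Theta>" and G: "G = Tn n A" by auto
        have m1: "G \<in> {G' \<in> Pr_p \<Theta> p. \<bar>(\<integral>x. (\<lambda>_. 0::real) x \<partial>G') - (\<integral>x. (\<lambda>_. 0::real) x \<partial>G)\<bar> < 1}"
          using PrpT[OF A] G by simp
        have m2: "{G' \<in> Pr_p \<Theta> p. \<bar>(\<integral>x. (\<lambda>_. 0::real) x \<partial>G') - (\<integral>x. (\<lambda>_. 0::real) x \<partial>G)\<bar> < 1} \<in>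
          {{G \<in> Pr_p \<Theta> p. \<bar>(\<integral>x. f x \<partial>G) - (\<integral>x. f x \<partial>G0)\<bar> < e} | f G0 e.
          bcont f \<and> G0 \<in> Pr_p \<Theta> p \<and> e > 0}"
          by (intro CollectI exI[of _ "\<lambda>_. 0::real"] exI[of _ G] exI[of _ "1::real"] conjI refl)
            (use bc0 PrpT[OF A] G in simp_all)
        show "G \<in> \<Union> ({{G \<in> Pr_p \<Theta> p. \<bar>(\<integral>x. f x \<partial>G) - (\<integral>x. f x \<partial>G0)\<bar> < e} | f G0 e.
          bcont f \<and> G0 \<in> Pr_p \<Theta> p \<and> e > 0} \<union>
          {{G \<in> Pr_p \<Theta> p. \<bar>(\<integral>x. \<bar>x\<bar> powr p \<partial>G) - (\<integral>x. \<bar>x\<bar> powr p \<partial>G0)\<bar> < e} | G0 e.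
          G0 \<in> Pr_p \<Theta> p \<and> e > 0})"
          by (rule UnionI[OF UnI1[OF m2] m1])
      qed
    qed
  qed
qed

end
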